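(* For every $(s,a)\in\mathcal{S}\times\mathcal{A}$, the map $\pi\mapsto d^\pi(s,a)$ is $L$-Lipschitz on $\Pi$ with $L=\frac{|\mathcal{A}|}{(1-\gamma)^2}$, i.e. $|d^{\pi'}(s,a)-d^\pi(s,a)|\le\frac{|\mathcal{A}|}{(1-\gamma)^2}\|\pi'-\pi\|_2$ for all $\pi,\pi'\in\Pi$.
   Context: Finite MDP with finite state space $\mathcal{S}$, finite action space $\mathcal{A}$, transition kernel $P$, discount $\gamma\in[0,1)$, initial distribution $\mu\in\Delta_{\mathcal{S}}$. $\Pi$: stationary randomized policies, viewed as vectors $(\pi(a|s))_{s,a}\in\mathbb{R}^{\mathcal{S}\times\mathcal{A}}$ with Euclidean norm $\|\cdot\|_2$; $P^\pi(s'|s)=\sum_a\pi(a|s)P(s'|s,a)$. Occupancy: $d^\pi=\mu^\top(I-\gamma P^\pi)^{-1}$, $d^\pi(s,a)=d^\pi(s)\pi(a|s)$. *)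

theory Defs
  imports "HOL-Analysis.Analysis"
begin

(* Finite MDP: states 's, actions 'a (finite types).
   Transition kernel P s a s' = P(s'|s,a); policy \<pi> s a = \<pi>(a|s). *)

definition is_kernel :: "('s::finite \<Rightarrow> 'a::finite \<Rightarrow> 's \<Rightarrow> real) \<Rightarrow> bool" where
  "is_kernel P \<longleftrightarrow> (\<forall>s a. (\<forall>s'. 0 \<le> P s a s') \<and> (\<Sum>s'\<in>UNIV. P s a s') = 1)"

definition is_distribution :: "('s::finite \<Rightarrow> real) \<Rightarrow> bool" where
  "is_distribution \<mu> \<longleftrightarrow> (\<forall>s. 0 \<le> \<mu> s) \<and> (\<Sum>s\<in>UNIV. \<mu> s) = 1"

definition is_policy :: "('s::finite \<Rightarrow> 'a::finite \<Rightarrow> real) \<Rightarrow> bool" where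
  "is_policy \<pi> \<longleftrightarrow> (\<forall>s. (\<forall>a. 0 \<le> \<pi> s a) \<and> (\<Sum>a\<in>UNIV. \<pi> s a) = 1)"

definition P_pi :: "('s::finite \<Rightarrow> 'a::finite \<Rightarrow> 's \<Rightarrow> real) \<Rightarrow> ('s \<Rightarrow> 'a \<Rightarrow> real) \<Rightarrow> real^'s^'s" where
  "P_pi P \<pi> = (\<chi> s s'. \<Sum>a\<in>UNIV. \<pi> s a * P s a s')"

definition state_occ :: "('s::finite \<Rightarrow> real) \<Rightarrow> ('s \<Rightarrow> 'a::finite \<Rightarrow> 's \<Rightarrow> real) \<Rightarrow> real
     \<Rightarrow> ('s \<Rightarrow> 'a \<Rightarrow> real) \<Rightarrow> real^'s" where
  "state_occ \<mu> P \<gamma> \<pi> = (\<chi> s. \<mu> s) v* matrix_inv (mat 1 - \<gamma> *\<^sub>R P_pi P \<pi>)"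

definition occ :: "('s::finite \<Rightarrow> real) \<Rightarrow> ('s \<Rightarrow> 'a::finite \<Rightarrow> 's \<Rightarrow> real) \<Rightarrow> real
     \<Rightarrow> ('s \<Rightarrow> 'a \<Rightarrow> real) \<Rightarrow> 's \<Rightarrow> 'a \<Rightarrow> real" where
  "occ \<mu> P \<gamma> \<pi> s a = state_occ \<mu> P \<gamma> \<pi> $ s * \<pi> s a"

definition policy_dist :: "('s::finite \<Rightarrow> 'a::finite \<Rightarrow> real) \<Rightarrow> ('s \<Rightarrow> 'a \<Rightarrow> real) \<Rightarrow> real" where
  "policy_dist \<pi>' \<pi> = sqrt (\<Sum>(s,a)\<in>UNIV. (\<pi>' s a - \<pi> s a)\<^sup>2)"

end

theory Submission
  imports Defs
begin

lemma Q_nonneg: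
  assumes "is_kernel P" "is_policy \<pi>"
  shows "0 \<le> P_pi P \<pi> $ i $ j"
  using assms unfolding is_kernel_def is_policy_def P_pi_def
  by (auto intro!: sum_nonneg)

lemma Q_rowsum:
  assumes "is_kernel P" "is_policy \<pi>"
  shows "(\<Sum>j\<in>UNIV. P_pi P \<pi> $ i $ j) = 1"
proof -
  have "(\<Sum>j\<in>UNIV. P_pi P \<pi> $ i $ j) = (\<Sum>a\<in>UNIV. \<pi> i a * (\<Sum>j\<in>UNIV. P i a j))"
  proof -
    have "(\<Sum>j\<in>UNIV. P_pi P \<pi> $ i $ j) = (\<Sum>j\<in>UNIV. \<Sum>a\<in>UNIV. \<pi> i a * P i a j)"
      unfolding P_pi_def by simp
    also have "\<dots> = (\<Sum>a\<in>UNIV. \<Sum>j\<in>UNIV. \<pi> i a * P i a j)" by (rule sum.swap)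
    also have "\<dots> = (\<Sum>a\<in>UNIV. \<pi> i a * (\<Sum>j\<in>UNIV. P i a j))" by (simp only: sum_distrib_left)
    finally show ?thesis .
  qed
  also have "\<dots> = 1" using assms unfolding is_kernel_def is_policy_def by simp
  finally show ?thesis .
qed

lemma vM:
  fixes Q :: "real^'n^'n"
  shows "(x v* (mat 1 - \<gamma> *\<^sub>R Q)) $ j = x $ j - \<gamma> * (\<Sum>i\<in>UNIV. x $ i * Q $ i $ j)"
proof -
  have "(x v* (mat 1 - \<gamma> *\<^sub>R Q)) $ j = (\<Sum>i\<in>UNIV. x $ i * ((if i = j then 1 else 0) - \<gamma> * Q $ i $ j))"
    by (simp add: vector_matrix_mult_def mat_def)
  also have "\<dots> = (\<Sum>i\<in>UNIV. x $ i * (if i = j then 1 else 0)) - \<gamma> * (\<Sum>i\<in>UNIV. x $ i * Q $ i $ j)"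
    by (simp add: right_diff_distrib sum_subtractf sum_distrib_left mult.left_commute)
  also have "(\<Sum>i\<in>UNIV. x $ i * (if i = j then 1 else 0)) = x $ j"
    by (simp add: if_distrib cong: if_cong)
  finally show ?thesis .
qed

lemma L1:
  fixes Q :: "real^'n^'n" and z y :: "real^'n"
  assumes nn: "\<And>i j. 0 \<le> Q $ i $ j" and rs: "\<And>i. (\<Sum>j\<in>UNIV. Q $ i $ j) = 1"
    and g: "0 \<le> \<gamma>"
    and eq: "\<And>j. z $ j - \<gamma> * (\<Sum>i\<in>UNIV. z $ i * Q $ i $ j) = y $ j"
  shows "(1 - \<gamma>) * (\<Sum>j\<in>UNIV. \<bar>z $ j\<bar>) \<le> (\<Sum>j\<in>UNIV. \<bar>y $ j\<bar>)"
proof -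
  have "\<bar>z $ j\<bar> \<le> \<bar>y $ j\<bar> + \<gamma> * (\<Sum>i\<in>UNIV. \<bar>z $ i\<bar> * Q $ i $ j)" for j
  proof -
    have "\<bar>\<Sum>i\<in>UNIV. z $ i * Q $ i $ j\<bar> \<le> (\<Sum>i\<in>UNIV. \<bar>z $ i\<bar> * Q $ i $ j)"
      by (rule order_trans[OF sum_abs]) (simp add: abs_mult nn)
    hence "\<gamma> * \<bar>\<Sum>i\<in>UNIV. z $ i * Q $ i $ j\<bar> \<le> \<gamma> * (\<Sum>i\<in>UNIV. \<bar>z $ i\<bar> * Q $ i $ j)"
      using g by (rule mult_left_mono)
    moreover have "z $ j = y $ j + \<gamma> * (\<Sum>i\<in>UNIV. z $ i * Q $ i $ j)" using eq[of j] by simp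
    hence "\<bar>z $ j\<bar> \<le> \<bar>y $ j\<bar> + \<bar>\<gamma> * (\<Sum>i\<in>UNIV. z $ i * Q $ i $ j)\<bar>"
      by (metis abs_triangle_ineq)
    ultimately show ?thesis using g by (simp add: abs_mult)
  qed
  hence "(\<Sum>j\<in>UNIV. \<bar>z $ j\<bar>) \<le> (\<Sum>j\<in>UNIV. \<bar>y $ j\<bar> + \<gamma> * (\<Sum>i\<in>UNIV. \<bar>z $ i\<bar> * Q $ i $ j))"
    by (rule sum_mono)
  also have "\<dots> = (\<Sum>j\<in>UNIV. \<bar>y $ j\<bar>) + \<gamma> * (\<Sum>i\<in>UNIV. \<bar>z $ i\<bar> * (\<Sum>j\<in>UNIV. Q $ i $ j))"
  proof -
    have "(\<Sum>j\<in>UNIV. \<Sum>i\<in>UNIV. \<bar>z $ i\<bar> * Q $ i $ j) = (\<Sum>i\<in>UNIV. \<Sum>j\<in>UNIV. \<bar>z $ i\<bar> * Q $ i $ j)"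
      by (rule sum.swap)
    thus ?thesis by (simp add: sum.distrib sum_distrib_left[symmetric])
  qed
  also have "\<dots> = (\<Sum>j\<in>UNIV. \<bar>y $ j\<bar>) + \<gamma> * (\<Sum>i\<in>UNIV. \<bar>z $ i\<bar>)" by (simp add: rs)
  finally show ?thesis by (simp add: algebra_simps)
qed

lemma M_invertible:
  fixes Q :: "real^'n^'n"
  assumes nn: "\<And>i j. 0 \<le> Q $ i $ j" and rs: "\<And>i. (\<Sum>j\<in>UNIV. Q $ i $ j) = 1"
    and g: "0 \<le> \<gamma>" "\<gamma> < 1"
  shows "invertible (mat 1 - \<gamma> *\<^sub>R Q)"
proof -
  let ?M = "mat 1 - \<gamma> *\<^sub>R Q"
  have "\<forall>x. transpose ?M *v x = 0 \<longrightarrow> x = 0"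
  proof (intro allI impI)
    fix x assume "transpose ?M *v x = 0"
    hence x0: "x v* ?M = 0" by simp
    have "(1 - \<gamma>) * (\<Sum>j\<in>UNIV. \<bar>x $ j\<bar>) \<le> (\<Sum>j\<in>UNIV. \<bar>(0::real^'n) $ j\<bar>)"
      by (rule L1[OF nn rs g(1)]) (metis vM x0)
    hence "(\<Sum>j\<in>UNIV. \<bar>x $ j\<bar>) \<le> 0" using g
      by (simp add: mult_le_0_iff)
    hence "(\<Sum>j\<in>UNIV. \<bar>x $ j\<bar>) = 0"
      by (intro antisym) (auto intro: sum_nonneg)
    hence "\<forall>j\<in>UNIV. \<bar>x $ j\<bar> = 0"
      using sum_nonneg_eq_0_iff[of UNIV "\<lambda>j. \<bar>x $ j\<bar>"] by simp
    thus "x = 0" by (simp add: vec_eq_iff)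
  qed
  hence "\<exists>B. B ** transpose ?M = mat 1" by (rule matrix_left_invertible_ker[THEN iffD2])
  hence "\<exists>B. ?M ** B = mat 1" by (rule left_invertible_transpose[THEN iffD1])
  thus ?thesis by (rule invertible_right_inverse[THEN iffD2])
qed

lemma occ_eq:
  assumes "is_kernel P" "is_policy \<pi>" "0 \<le> \<gamma>" "\<gamma> < 1"
  shows "state_occ \<mu> P \<gamma> \<pi> $ j - \<gamma> * (\<Sum>i\<in>UNIV. state_occ \<mu> P \<gamma> \<pi> $ i * P_pi P \<pi> $ i $ j) = \<mu> j"
proof -
  let ?M = "mat 1 - \<gamma> *\<^sub>R P_pi P \<pi>"
  have inv: "invertible ?M"
    by (rule M_invertible) (use assms Q_nonneg Q_rowsum in auto)
  have "matrix_inv ?M ** ?M = mat 1"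
    using someI_ex[OF inv[unfolded invertible_def]] unfolding matrix_inv_def by blast
  hence "state_occ \<mu> P \<gamma> \<pi> v* ?M = (\<chi> s. \<mu> s)"
    unfolding state_occ_def by (simp add: vector_matrix_mul_assoc)
  hence "(state_occ \<mu> P \<gamma> \<pi> v* ?M) $ j = \<mu> j" by simp
  thus ?thesis by (simp only: vM)
qed


lemma P_pi_nth: "P_pi P p $ i $ j = (\<Sum>a\<in>UNIV. p i a * P i a j)"
  unfolding P_pi_def by simp

lemma Qdiff:
  "P_pi P \<pi>' $ i $ j - P_pi P \<pi> $ i $ j = (\<Sum>a\<in>UNIV. (\<pi>' i a - \<pi> i a) * P i a j)"
  unfolding P_pi_nth by (simp only: sum_subtractf[symmetric] left_diff_distrib)

lemma pd_bound:
  fixes \<pi> \<pi>' :: "'s::finite \<Rightarrow> 'a::finite \<Rightarrow> real"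
  shows "\<bar>\<pi>' s a - \<pi> s a\<bar> \<le> policy_dist \<pi>' \<pi>"
proof -
  have "(\<lambda>(s,a). (\<pi>' s a - \<pi> s a)\<^sup>2) (s,a) \<le> (\<Sum>(s,a)\<in>UNIV. (\<pi>' s a - \<pi> s a)\<^sup>2)"
    by (rule member_le_sum) (auto split: prod.splits)
  hence "(\<pi>' s a - \<pi> s a)\<^sup>2 \<le> (\<Sum>(s,a)\<in>UNIV. (\<pi>' s a - \<pi> s a)\<^sup>2)" by simp
  hence "sqrt ((\<pi>' s a - \<pi> s a)\<^sup>2) \<le> policy_dist \<pi>' \<pi>"
    unfolding policy_dist_def by (rule real_sqrt_le_mono)
  thus ?thesis by simp
qed

lemma y_bound:
  fixes P :: "'s::finite \<Rightarrow> 'a::finite \<Rightarrow> 's \<Rightarrow> real" and d :: "real^'s"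
  assumes "is_kernel P" and D: "\<And>i a. \<bar>\<Delta> i a\<bar> \<le> D" and g: "0 \<le> \<gamma>"
  shows "(\<Sum>j\<in>UNIV. \<bar>\<gamma> * (\<Sum>i\<in>UNIV. d $ i * (\<Sum>a\<in>UNIV. \<Delta> i a * P i a j))\<bar>)
     \<le> \<gamma> * (D * real CARD('a) * (\<Sum>i\<in>UNIV. \<bar>d $ i\<bar>))"
proof -
  have Pn: "0 \<le> P i a j" for i a j using assms(1) unfolding is_kernel_def by auto
  have Ps: "(\<Sum>j\<in>UNIV. P i a j) = 1" for i a using assms(1) unfolding is_kernel_def by auto
  have "\<bar>\<Sum>i\<in>UNIV. d $ i * (\<Sum>a\<in>UNIV. \<Delta> i a * P i a j)\<bar>
        \<le> (\<Sum>i\<in>UNIV. \<bar>d $ i\<bar> * (\<Sum>a\<in>UNIV. D * P i a j))" for j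
  proof -
    have "\<bar>\<Sum>i\<in>UNIV. d $ i * (\<Sum>a\<in>UNIV. \<Delta> i a * P i a j)\<bar>
        \<le> (\<Sum>i\<in>UNIV. \<bar>d $ i * (\<Sum>a\<in>UNIV. \<Delta> i a * P i a j)\<bar>)" by (rule sum_abs)
    also have "\<dots> \<le> (\<Sum>i\<in>UNIV. \<bar>d $ i\<bar> * (\<Sum>a\<in>UNIV. D * P i a j))"
    proof (rule sum_mono)
      fix i
      have "\<bar>\<Sum>a\<in>UNIV. \<Delta> i a * P i a j\<bar> \<le> (\<Sum>a\<in>UNIV. \<bar>\<Delta> i a * P i a j\<bar>)" by (rule sum_abs)
      also have "\<dots> \<le> (\<Sum>a\<in>UNIV. D * P i a j)"
        by (rule sum_mono) (simp add: abs_mult Pn D mult_right_mono)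
      finally show "\<bar>d $ i * (\<Sum>a\<in>UNIV. \<Delta> i a * P i a j)\<bar> \<le> \<bar>d $ i\<bar> * (\<Sum>a\<in>UNIV. D * P i a j)"
        by (simp add: abs_mult mult_left_mono)
    qed
    finally show ?thesis .
  qed
  hence "(\<Sum>j\<in>UNIV. \<bar>\<gamma> * (\<Sum>i\<in>UNIV. d $ i * (\<Sum>a\<in>UNIV. \<Delta> i a * P i a j))\<bar>)
     \<le> (\<Sum>j\<in>UNIV. \<gamma> * (\<Sum>i\<in>UNIV. \<bar>d $ i\<bar> * (\<Sum>a\<in>UNIV. D * P i a j)))"
    using g by (intro sum_mono) (simp add: abs_mult mult_left_mono)
  also have "\<dots> = \<gamma> * (\<Sum>i\<in>UNIV. \<Sum>a\<in>UNIV. \<Sum>j\<in>UNIV. \<bar>d $ i\<bar> * D * P i a j)"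
  proof -
    have "(\<Sum>j\<in>UNIV. \<Sum>i\<in>UNIV. \<Sum>a\<in>UNIV. \<bar>d $ i\<bar> * D * P i a j)
        = (\<Sum>i\<in>UNIV. \<Sum>j\<in>UNIV. \<Sum>a\<in>UNIV. \<bar>d $ i\<bar> * D * P i a j)" by (rule sum.swap)
    also have "\<dots> = (\<Sum>i\<in>UNIV. \<Sum>a\<in>UNIV. \<Sum>j\<in>UNIV. \<bar>d $ i\<bar> * D * P i a j)"
      by (rule sum.cong[OF refl], rule sum.swap)
    finally show ?thesis
      by (simp add: sum_distrib_left[symmetric] mult.assoc)
  qed
  also have "\<dots> = \<gamma> * (\<Sum>i\<in>UNIV. \<bar>d $ i\<bar> * D * real CARD('a))"
  proof -
    have "(\<Sum>j\<in>UNIV. \<bar>d $ i\<bar> * D * P i a j) = \<bar>d $ i\<bar> * D" for i a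
      by (simp add: sum_distrib_left[symmetric] Ps)
    thus ?thesis by (simp add: mult_ac)
  qed
  also have "\<dots> = \<gamma> * ((\<Sum>i\<in>UNIV. \<bar>d $ i\<bar>) * (D * real CARD('a)))"
    by (simp only: sum_distrib_right mult.assoc)
  also have "\<dots> = \<gamma> * (D * real CARD('a) * (\<Sum>i\<in>UNIV. \<bar>d $ i\<bar>))"
    by (rule arg_cong[where f="\<lambda>x. \<gamma> * x"]) (rule mult.commute)
  finally show ?thesis .
qed

theorem proposition4:
  fixes P :: "'s::finite \<Rightarrow> 'a::finite \<Rightarrow> 's \<Rightarrow> real"
    and \<mu> :: "'s \<Rightarrow> real" and \<gamma> :: real
    and \<pi> \<pi>' :: "'s \<Rightarrow> 'a \<Rightarrow> real"
  assumes "is_kernel P" and "is_distribution \<mu>"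
    and "0 \<le> \<gamma>" and "\<gamma> < 1"
    and "is_policy \<pi>" and "is_policy \<pi>'"
  shows "\<bar>occ \<mu> P \<gamma> \<pi>' s a - occ \<mu> P \<gamma> \<pi> s a\<bar>
           \<le> real CARD('a) / (1 - \<gamma>)\<^sup>2 * policy_dist \<pi>' \<pi>"
proof -
  define d where "d = state_occ \<mu> P \<gamma> \<pi>"
  define d' where "d' = state_occ \<mu> P \<gamma> \<pi>'"
  define Q where "Q = P_pi P \<pi>"
  define Q' where "Q' = P_pi P \<pi>'"
  define D where "D = policy_dist \<pi>' \<pi>"
  define A where "A = real CARD('a)"
  define z where "z = d' - d"
  define y :: "real^'s" where "y = (\<chi> j. \<gamma> * (\<Sum>i\<in>UNIV. d $ i * (\<Sum>a\<in>UNIV. (\<pi>' i a - \<pi> i a) * P i a j)))"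
  have g: "0 \<le> \<gamma>" "\<gamma> < 1" using assms by auto
  have A1: "1 \<le> A" unfolding A_def by simp
  have D0: "0 \<le> D" unfolding D_def policy_dist_def
    by (intro real_sqrt_ge_zero sum_nonneg) (auto split: prod.splits)
  have Dd: "\<bar>\<pi>' i b - \<pi> i b\<bar> \<le> D" for i b unfolding D_def by (rule pd_bound)
  have Qn: "0 \<le> Q' $ i $ j" for i j unfolding Q'_def using assms Q_nonneg by blast
  have Qs: "(\<Sum>j\<in>UNIV. Q' $ i $ j) = 1" for i unfolding Q'_def using assms Q_rowsum by blast
  have Qn0: "0 \<le> Q $ i $ j" for i j unfolding Q_def using assms Q_nonneg by blast
  have Qs0: "(\<Sum>j\<in>UNIV. Q $ i $ j) = 1" for i unfolding Q_def using assms Q_rowsum by blast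
  have e: "d $ j - \<gamma> * (\<Sum>i\<in>UNIV. d $ i * Q $ i $ j) = \<mu> j" for j
    unfolding d_def Q_def using occ_eq assms by blast
  have e': "d' $ j - \<gamma> * (\<Sum>i\<in>UNIV. d' $ i * Q' $ i $ j) = \<mu> j" for j
    unfolding d'_def Q'_def using occ_eq assms by blast
  have mu1: "(\<Sum>j\<in>UNIV. \<bar>(\<chi> s. \<mu> s) $ j\<bar>) = 1"
    using assms(2) unfolding is_distribution_def by simp
  have "(1 - \<gamma>) * (\<Sum>j\<in>UNIV. \<bar>d $ j\<bar>) \<le> (\<Sum>j\<in>UNIV. \<bar>(\<chi> s. \<mu> s) $ j\<bar>)"
    by (rule L1[OF Qn0 Qs0 g(1)]) (simp add: e)
  hence dn: "(\<Sum>j\<in>UNIV. \<bar>d $ j\<bar>) \<le> 1 / (1 - \<gamma>)"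
    using g mu1 by (simp add: field_simps)
  have ze: "z $ j - \<gamma> * (\<Sum>i\<in>UNIV. z $ i * Q' $ i $ j) = y $ j" for j
  proof -
    have H1: "(\<Sum>i\<in>UNIV. z $ i * Q' $ i $ j) = (\<Sum>i\<in>UNIV. d' $ i * Q' $ i $ j) - (\<Sum>i\<in>UNIV. d $ i * Q' $ i $ j)"
      unfolding z_def by (simp add: left_diff_distrib sum_subtractf)
    have H2: "y $ j = \<gamma> * ((\<Sum>i\<in>UNIV. d $ i * Q' $ i $ j) - (\<Sum>i\<in>UNIV. d $ i * Q $ i $ j))"
      unfolding y_def Q_def Q'_def by (simp add: Qdiff[symmetric] right_diff_distrib sum_subtractf)
    have Hz: "z $ j = d' $ j - d $ j" unfolding z_def by simp
    show ?thesis unfolding H1 unfolding H2 Hz using e[of j] e'[of j]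
      by (simp only: right_diff_distrib)
  qed
  have "(1 - \<gamma>) * (\<Sum>j\<in>UNIV. \<bar>z $ j\<bar>) \<le> (\<Sum>j\<in>UNIV. \<bar>y $ j\<bar>)"
    by (rule L1[OF Qn Qs g(1) ze])
  also have "\<dots> \<le> \<gamma> * (D * A * (\<Sum>i\<in>UNIV. \<bar>d $ i\<bar>))"
    unfolding y_def A_def using y_bound[OF assms(1) Dd g(1), of d] by simp
  also have "\<dots> \<le> \<gamma> * (D * A * (1 / (1 - \<gamma>)))"
    using dn g D0 A1 by (intro mult_left_mono) auto
  finally have zn0: "(1 - \<gamma>) * (\<Sum>j\<in>UNIV. \<bar>z $ j\<bar>) \<le> \<gamma> * D * A / (1 - \<gamma>)"
    by (simp add: mult.assoc)
  have g1: "0 < 1 - \<gamma>" using g by simp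
  have "(\<Sum>j\<in>UNIV. \<bar>z $ j\<bar>) \<le> (\<gamma> * D * A / (1 - \<gamma>)) / (1 - \<gamma>)"
    using zn0 g1 by (simp add: pos_le_divide_eq mult.commute)
  hence zn: "(\<Sum>j\<in>UNIV. \<bar>z $ j\<bar>) \<le> \<gamma> * D * A / (1 - \<gamma>)\<^sup>2"
    by (simp add: power2_eq_square divide_divide_eq_left)
  have zs: "\<bar>z $ s\<bar> \<le> \<gamma> * D * A / (1 - \<gamma>)\<^sup>2"
    using member_le_sum[of s UNIV "\<lambda>j. \<bar>z $ j\<bar>"] zn by simp
  have ds: "\<bar>d $ s\<bar> \<le> 1 / (1 - \<gamma>)"
    using member_le_sum[of s UNIV "\<lambda>j. \<bar>d $ j\<bar>"] dn by simp
  have p1: "0 \<le> \<pi>' s a" "\<pi>' s a \<le> 1"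
  proof -
    show "0 \<le> \<pi>' s a" using assms(6) unfolding is_policy_def by auto
    have "\<pi>' s a \<le> (\<Sum>b\<in>UNIV. \<pi>' s b)"
      using assms(6) unfolding is_policy_def by (intro member_le_sum) auto
    thus "\<pi>' s a \<le> 1" using assms(6) unfolding is_policy_def by auto
  qed
  have "occ \<mu> P \<gamma> \<pi>' s a - occ \<mu> P \<gamma> \<pi> s a = z $ s * \<pi>' s a + d $ s * (\<pi>' s a - \<pi> s a)"
    unfolding occ_def z_def d_def d'_def by (simp add: algebra_simps)
  hence "\<bar>occ \<mu> P \<gamma> \<pi>' s a - occ \<mu> P \<gamma> \<pi> s a\<bar> \<le> \<bar>z $ s\<bar> * \<pi>' s a + \<bar>d $ s\<bar> * \<bar>\<pi>' s a - \<pi> s a\<bar>"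
    using p1 by (simp add: abs_mult) (metis abs_triangle_ineq abs_mult abs_of_nonneg)
  also have "\<dots> \<le> \<gamma> * D * A / (1 - \<gamma>)\<^sup>2 * 1 + 1 / (1 - \<gamma>) * D"
    using zs ds p1 Dd[of s a] g by (intro add_mono mult_mono) auto
  also have "\<dots> \<le> A / (1 - \<gamma>)\<^sup>2 * D"
  proof -
    have "(1 - \<gamma>) * D \<le> (1 - \<gamma>) * (A * D)" using g D0 A1
      by (intro mult_left_mono) (auto simp: mult_le_cancel_right1)
    hence H: "\<gamma> * D * A + (1 - \<gamma>) * D \<le> A * D" by (simp add: algebra_simps)
    have c: "0 < (1 - \<gamma>)\<^sup>2" using g by simp
    have "1 / (1 - \<gamma>) * D = (1 - \<gamma>) * D / (1 - \<gamma>)\<^sup>2" using g by (simp add: power2_eq_square)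
    hence "\<gamma> * D * A / (1 - \<gamma>)\<^sup>2 * 1 + 1 / (1 - \<gamma>) * D = (\<gamma> * D * A + (1 - \<gamma>) * D) / (1 - \<gamma>)\<^sup>2"
      by (simp add: add_divide_distrib)
    also have "\<dots> \<le> (A * D) / (1 - \<gamma>)\<^sup>2"
      by (rule divide_right_mono[OF H]) (use c in simp)
    also have "\<dots> = A / (1 - \<gamma>)\<^sup>2 * D" by simp
    finally show ?thesis .
  qed
  finally show ?thesis unfolding A_def D_def .
qed

end
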